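(* Let $(P,\mathcal C,\varepsilon)$ be a chained projection category. Define $\mathbf S(P,\mathcal C,\varepsilon)=(S,\star,D,R)$ by $S=\mathcal C$, $D(a)=\mathbf d(a)$, $R(a)=\mathbf r(a)$, and for $a,b\in\mathcal C$, with $p=\mathbf r(a)$, $q=\mathbf d(b)$, $p'=q\delta_p$, $q'=p\theta_q$, $$a\star b=a\rfloor_{p'}\circ\varepsilon[p',q']\circ{}_{q'}\lfloor b.$$ Then $\mathbf S(P,\mathcal C,\varepsilon)$ is a DRC-semigroup.
   Context: (The product is well defined since $p'\le p$, $q'\le q$ and $p'\,\mathscr F\,q'$.) \textbf{DRC-semigroups.} A DRC-semigroup is an algebra $(S,\cdot,D,R)$ with $(S,\cdot)$ a semigroup and unary $D,R$ satisfying, for all $a,b$: $D(a)a=a$, $aR(a)=a$; $D(ab)=D(aD(b))$, $R(ab)=R(R(a)b)$; $D(ab)=D(a)D(ab)D(a)$, $R(ab)=R(b)R(ab)R(b)$; $R(D(a))=D(a)$, $D(R(a))=R(a)$. \textbf{Projection algebras.} Maps are written on the right and composed left to right. A projection algebra is a set $P$ with maps $\theta_p,\delta_p:P\to P$ ($p\in P$) such that for all $p,q$: $p\theta_p=p$, $p\delta_p=p$; $p\theta_{q\theta_p}=q\theta_p$, $p\delta_{q\delta_p}=q\delta_p$; $\theta_q\theta_{q\theta_p}=\theta_q\theta_p$, $\delta_q\delta_{q\delta_p}=\delta_q\delta_p$; $\theta_p\delta_p=\theta_p$, $\delta_p\theta_p=\delta_p$; $\theta_{p\delta_q}\theta_p=\theta_q\theta_p$,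 $\delta_{p\theta_q}\delta_p=\delta_q\delta_p$. Order: $p\le q\iff p=p\theta_q$. Relation: $p\,\mathscr F\,q\iff p=q\delta_p$ and $q=p\theta_q$. \textbf{Biordered categories.} A small category is identified with its morphisms, objects with identities ($v\mathcal C$); $\mathbf d,\mathbf r$ are domain/codomain and $a\circ b$ is defined iff $\mathbf r(a)=\mathbf d(b)$. A left-ordered category is $(\mathcal C,\le)$, $\le$ a partial order with: $a\le b\Rightarrow\mathbf d(a)\le\mathbf d(b),\mathbf r(a)\le\mathbf r(b)$; $a\le b$, $c\le c'$ with $a\circ c$, $b\circ c'$ defined $\Rightarrow a\circ c\le b\circ c'$; for each object $p\le\mathbf d(a)$ a unique $u\le a$ with $\mathbf d(u)=p$ (denoted ${}_p\lfloor a$). Right-ordered: dually, a unique $v\le a$ with $\mathbf r(v)=q$ for each object $q\le\mathbf r(a)$ (denoted $a\rfloor_q$). A biordered category $(\mathcal C,\le_l,\le_r)$ is left-ordered under $\le_l$, right-ordered under $\le_r$, with $\le_l,\le_r$ equal on $v\mathcal C$. Biordered morphisms are functors preserving both orders. $t^\downarrow=\{s:s\le t\}$; $\mathcal C(q,r)=\{a:\mathbf d(a)=q,\mathbf r(a)=r\}$. \textbf{Projection categories.} A weak projection category $(P,\mathcal C)$: $\mathcal C$ biordered, $P=v\mathcal C$ a projection algebra whose order equals the restriction of $\le_l$ and of $\le_r$. For $a\in\mathcal C$: $p\vartheta_a=\mathbf r({}_p\lfloor a)$ for $p\le\mathbf d(a)$; $q\vartheta'_a=\mathbf d(a\rfloor_q)$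 for $q\le\mathbf r(a)$; $\Theta_a=\theta_{\mathbf d(a)}\vartheta_a$, $\Delta_a=\delta_{\mathbf r(a)}\vartheta'_a$ (maps $P\to P$). A projection category also satisfies (C1): $\Theta_{a\rfloor_q}=\Theta_a\theta_q$, $\Delta_{{}_p\lfloor a}=\Delta_a\delta_p$ for $p\le\mathbf d(a)$, $q\le\mathbf r(a)$. \textbf{Chain category.} Paths: tuples $(p_1,\dots,p_k)$ with $p_1\mathscr F\cdots\mathscr F p_k$, $\mathbf d=p_1$, $\mathbf r=p_k$, composition $(p_1,\dots,p_k)\circ(p_k,\dots,p_l)=(p_1,\dots,p_l)$; restrictions ${}_q\lfloor(p_1,\dots,p_k)=(q_1,\dots,q_k)$, $q_1=q\le p_1$, $q_i=q_{i-1}\theta_{p_i}$; $(p_1,\dots,p_k)\rfloor_r=(r_1,\dots,r_k)$, $r_k=r\le p_k$, $r_i=r_{i+1}\delta_{p_i}$. The chain category $\mathcal C(P)$ is the quotient of this (biordered) path category by the congruence generated by $(p,p)\approx(p)$, with elements $[p_1,\dots,p_k]$, objects $P$, and restrictions computed on representatives. \textbf{Chained projection categories.} An evaluation map is a biordered functor $\varepsilon:\mathcal C(P)\to\mathcal C$ with $\varepsilon[p]=p$. For $b\in\mathcal C(q,r)$, $p,s\in P$, let $e=s\Delta_b\delta_p$, $e_1=s\Delta_b\delta_{p\theta_q}$, $e_2=p\theta_{s\Delta_b}$, $f=p\Theta_b\theta_s$, $f_1=s\delta_{p\Theta_b}$, $f_2=p\Theta_b\theta_{s\delta_r}$ (the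 following are then defined), $\lambda(p,b,s)=\varepsilon[e,e_1]\circ({}_{p\theta_q}\lfloor b)\rfloor_{f_1}\circ\varepsilon[f_1,f]$, $\rho(p,b,s)=\varepsilon[e,e_2]\circ{}_{e_2}\lfloor(b\rfloor_{s\delta_r})\circ\varepsilon[f_2,f]$. A chained projection category is a triple $(P,\mathcal C,\varepsilon)$ with $(P,\mathcal C)$ a projection category, $\varepsilon$ an evaluation map, and (C2) $\lambda(p,b,s)=\rho(p,b,s)$ for all $b\in\mathcal C$, $p,s\in P$. *)

theory Defs
  imports Main
begin

text \<open>A small category is identified with its set of morphisms; objects are the
identities.  Composition is diagrammatic: comp a b is defined iff cod a = dom b.
Maps of projection algebras are written on the right in the paper; here
theta p x stands for x theta_p, and delta p x stands for x delta_p.\<close>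

record 'm cpc =
  Mor   :: "'m set"
  Dom   :: "'m \<Rightarrow> 'm"
  Cod   :: "'m \<Rightarrow> 'm"
  Comp  :: "'m \<Rightarrow> 'm \<Rightarrow> 'm"
  LeL   :: "'m \<Rightarrow> 'm \<Rightarrow> bool"
  LeR   :: "'m \<Rightarrow> 'm \<Rightarrow> bool"
  Theta :: "'m \<Rightarrow> 'm \<Rightarrow> 'm"
  Delta :: "'m \<Rightarrow> 'm \<Rightarrow> 'm"
  Eps   :: "'m list \<Rightarrow> 'm"

definition Obj :: "('m, 'z) cpc_scheme \<Rightarrow> 'm set" where
  "Obj K = {a \<in> Mor K. Dom K a = a}"

definition is_category :: "('m, 'z) cpc_scheme \<Rightarrow> bool" where
  "is_category K \<longleftrightarrow>
     (\<forall>a\<in>Mor K. Dom K a \<in> Mor K \<and> Cod K a \<in> Mor K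
        \<and> Dom K (Dom K a) = Dom K a \<and> Cod K (Dom K a) = Dom K a
        \<and> Dom K (Cod K a) = Cod K a \<and> Cod K (Cod K a) = Cod K a
        \<and> Comp K (Dom K a) a = a \<and> Comp K a (Cod K a) = a)
   \<and> (\<forall>a\<in>Mor K. \<forall>b\<in>Mor K. Cod K a = Dom K b \<longrightarrow>
        Comp K a b \<in> Mor K \<and> Dom K (Comp K a b) = Dom K a \<and> Cod K (Comp K a b) = Cod K b)
   \<and> (\<forall>a\<in>Mor K. \<forall>b\<in>Mor K. \<forall>c\<in>Mor K. Cod K a = Dom K b \<longrightarrow> Cod K b = Dom K c \<longrightarrow>
        Comp K (Comp K a b) c = Comp K a (Comp K b c))"

definition partial_order_on' :: "'m set \<Rightarrow> ('m \<Rightarrow> 'm \<Rightarrow> bool) \<Rightarrow> bool" where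
  "partial_order_on' A le \<longleftrightarrow>
     (\<forall>a\<in>A. le a a)
   \<and> (\<forall>a\<in>A. \<forall>b\<in>A. le a b \<longrightarrow> le b a \<longrightarrow> a = b)
   \<and> (\<forall>a\<in>A. \<forall>b\<in>A. \<forall>c\<in>A. le a b \<longrightarrow> le b c \<longrightarrow> le a c)"

definition left_ordered :: "('m, 'z) cpc_scheme \<Rightarrow> bool" where
  "left_ordered K \<longleftrightarrow> is_category K \<and> partial_order_on' (Mor K) (LeL K)
   \<and> (\<forall>a\<in>Mor K. \<forall>b\<in>Mor K. LeL K a b \<longrightarrow>
        LeL K (Dom K a) (Dom K b) \<and> LeL K (Cod K a) (Cod K b))
   \<and> (\<forall>a\<in>Mor K. \<forall>b\<in>Mor K. \<forall>c\<in>Mor K. \<forall>c'\<in>Mor K.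
        LeL K a b \<longrightarrow> LeL K c c' \<longrightarrow> Cod K a = Dom K c \<longrightarrow> Cod K b = Dom K c' \<longrightarrow>
        LeL K (Comp K a c) (Comp K b c'))
   \<and> (\<forall>a\<in>Mor K. \<forall>p\<in>Obj K. LeL K p (Dom K a) \<longrightarrow>
        (\<exists>!u. u \<in> Mor K \<and> LeL K u a \<and> Dom K u = p))"

definition right_ordered :: "('m, 'z) cpc_scheme \<Rightarrow> bool" where
  "right_ordered K \<longleftrightarrow> is_category K \<and> partial_order_on' (Mor K) (LeR K)
   \<and> (\<forall>a\<in>Mor K. \<forall>b\<in>Mor K. LeR K a b \<longrightarrow>
        LeR K (Dom K a) (Dom K b) \<and> LeR K (Cod K a) (Cod K b))
   \<and> (\<forall>a\<in>Mor K. \<forall>b\<in>Mor K. \<forall>c\<in>Mor K. \<forall>c'\<in>Mor K.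
        LeR K a b \<longrightarrow> LeR K c c' \<longrightarrow> Cod K a = Dom K c \<longrightarrow> Cod K b = Dom K c' \<longrightarrow>
        LeR K (Comp K a c) (Comp K b c'))
   \<and> (\<forall>a\<in>Mor K. \<forall>q\<in>Obj K. LeR K q (Cod K a) \<longrightarrow>
        (\<exists>!v. v \<in> Mor K \<and> LeR K v a \<and> Cod K v = q))"

definition biordered :: "('m, 'z) cpc_scheme \<Rightarrow> bool" where
  "biordered K \<longleftrightarrow> left_ordered K \<and> right_ordered K
   \<and> (\<forall>p\<in>Obj K. \<forall>q\<in>Obj K. LeL K p q \<longleftrightarrow> LeR K p q)"

text \<open>Restrictions: lrest K p a is the paper's  {}_p\<lfloor> a,  rrest K a q is  a\<rfloor>_q.\<close>

definition lrest :: "('m, 'z) cpc_scheme \<Rightarrow> 'm \<Rightarrow> 'm \<Rightarrow> 'm" where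
  "lrest K p a = (THE u. u \<in> Mor K \<and> LeL K u a \<and> Dom K u = p)"

definition rrest :: "('m, 'z) cpc_scheme \<Rightarrow> 'm \<Rightarrow> 'm \<Rightarrow> 'm" where
  "rrest K a q = (THE v. v \<in> Mor K \<and> LeR K v a \<and> Cod K v = q)"

definition projection_algebra :: "'m set \<Rightarrow> ('m \<Rightarrow> 'm \<Rightarrow> 'm) \<Rightarrow> ('m \<Rightarrow> 'm \<Rightarrow> 'm) \<Rightarrow> bool" where
  "projection_algebra P th de \<longleftrightarrow>
     (\<forall>p\<in>P. \<forall>x\<in>P. th p x \<in> P \<and> de p x \<in> P)
   \<and> (\<forall>p\<in>P. th p p = p \<and> de p p = p)
   \<and> (\<forall>p\<in>P. \<forall>q\<in>P. th (th p q) p = th p q \<and> de (de p q) p = de p q)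
   \<and> (\<forall>p\<in>P. \<forall>q\<in>P. \<forall>x\<in>P. th (th p q) (th q x) = th p (th q x)
                       \<and> de (de p q) (de q x) = de p (de q x))
   \<and> (\<forall>p\<in>P. \<forall>x\<in>P. de p (th p x) = th p x \<and> th p (de p x) = de p x)
   \<and> (\<forall>p\<in>P. \<forall>q\<in>P. \<forall>x\<in>P. th p (th (de q p) x) = th p (th q x)
                       \<and> de p (de (th q p) x) = de p (de q x))"

definition pa_le :: "('m, 'z) cpc_scheme \<Rightarrow> 'm \<Rightarrow> 'm \<Rightarrow> bool" where
  "pa_le K p q \<longleftrightarrow> p = Theta K q p"

definition pa_F :: "('m, 'z) cpc_scheme \<Rightarrow> 'm \<Rightarrow> 'm \<Rightarrow> bool" where
  "pa_F K p q \<longleftrightarrow> p = Delta K p q \<and> q = Theta K q p"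

definition weak_projection_category :: "('m, 'z) cpc_scheme \<Rightarrow> bool" where
  "weak_projection_category K \<longleftrightarrow> biordered K
   \<and> projection_algebra (Obj K) (Theta K) (Delta K)
   \<and> (\<forall>p\<in>Obj K. \<forall>q\<in>Obj K. (pa_le K p q \<longleftrightarrow> LeL K p q) \<and> (pa_le K p q \<longleftrightarrow> LeR K p q))"

definition BigTheta :: "('m, 'z) cpc_scheme \<Rightarrow> 'm \<Rightarrow> 'm \<Rightarrow> 'm" where
  "BigTheta K a x = Cod K (lrest K (Theta K (Dom K a) x) a)"

definition BigDelta :: "('m, 'z) cpc_scheme \<Rightarrow> 'm \<Rightarrow> 'm \<Rightarrow> 'm" where
  "BigDelta K a x = Dom K (rrest K a (Delta K (Cod K a) x))"

definition projection_category :: "('m, 'z) cpc_scheme \<Rightarrow> bool" where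
  "projection_category K \<longleftrightarrow> weak_projection_category K
   \<and> (\<forall>a\<in>Mor K. \<forall>q\<in>Obj K. pa_le K q (Cod K a) \<longrightarrow>
        (\<forall>x\<in>Obj K. BigTheta K (rrest K a q) x = Theta K q (BigTheta K a x)))
   \<and> (\<forall>a\<in>Mor K. \<forall>p\<in>Obj K. pa_le K p (Dom K a) \<longrightarrow>
        (\<forall>x\<in>Obj K. BigDelta K (lrest K p a) x = Delta K p (BigDelta K a x)))"

definition is_path :: "('m, 'z) cpc_scheme \<Rightarrow> 'm list \<Rightarrow> bool" where
  "is_path K w \<longleftrightarrow> w \<noteq> [] \<and> set w \<subseteq> Obj K \<and> successively (pa_F K) w"

fun lrest_path_aux :: "('m, 'z) cpc_scheme \<Rightarrow> 'm \<Rightarrow> 'm list \<Rightarrow> 'm list" where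
  "lrest_path_aux K x [] = []"
| "lrest_path_aux K x (p # ps) = Theta K p x # lrest_path_aux K (Theta K p x) ps"

definition lrest_path :: "('m, 'z) cpc_scheme \<Rightarrow> 'm \<Rightarrow> 'm list \<Rightarrow> 'm list" where
  "lrest_path K q w = q # lrest_path_aux K q (tl w)"

fun rrest_path_aux :: "('m, 'z) cpc_scheme \<Rightarrow> 'm \<Rightarrow> 'm list \<Rightarrow> 'm list" where
  "rrest_path_aux K x [] = []"
| "rrest_path_aux K x (p # ps) = Delta K p x # rrest_path_aux K (Delta K p x) ps"

text \<open>(p_1,...,p_k)\<rfloor>_r = (r_1,...,r_k), r_k = r, r_i = r_{i+1} delta_{p_i}.\<close>
definition rrest_path :: "('m, 'z) cpc_scheme \<Rightarrow> 'm list \<Rightarrow> 'm \<Rightarrow> 'm list" where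
  "rrest_path K w r = rev (r # rrest_path_aux K r (tl (rev w)))"

text \<open>Orders of the path category: w \<le>_l w' iff w is a left restriction of w'
  to some projection below d(w'); dually for \<le>_r.  The orders of the chain
  category are computed on representatives.\<close>

definition path_le_l :: "('m, 'z) cpc_scheme \<Rightarrow> 'm list \<Rightarrow> 'm list \<Rightarrow> bool" where
  "path_le_l K w w' \<longleftrightarrow> (\<exists>p\<in>Obj K. pa_le K p (hd w') \<and> w = lrest_path K p w')"

definition path_le_r :: "('m, 'z) cpc_scheme \<Rightarrow> 'm list \<Rightarrow> 'm list \<Rightarrow> bool" where
  "path_le_r K w w' \<longleftrightarrow> (\<exists>q\<in>Obj K. pa_le K q (last w') \<and> w = rrest_path K w' q)"

text \<open>The congruence on paths generated by (p,p) \<approx> (p): since it must be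
  compatible with composition, it is the equivalence closure of replacing a
  factor (p,p) by (p) anywhere in a path.\<close>

definition dup_step :: "'m list \<Rightarrow> 'm list \<Rightarrow> bool" where
  "dup_step u v \<longleftrightarrow> (\<exists>xs p ys. u = xs @ [p, p] @ ys \<and> v = xs @ [p] @ ys)"

definition chain_equiv :: "'m list \<Rightarrow> 'm list \<Rightarrow> bool" where
  "chain_equiv = (\<lambda>u v. dup_step u v \<or> dup_step v u)\<^sup>*\<^sup>*"

text \<open>An evaluation map \<epsilon> : C(P) \<rightarrow> C is represented by the function Eps K on
  representatives (paths): it must be constant on chain_equiv-classes (so that it
  is a map on the chain category C(P)), a functor, a biordered morphism and satisfy
  \<epsilon>[p] = p.  Eps K [p_1,...,p_k] stands for \<epsilon>[p_1,...,p_k].\<close>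

definition evaluation_map :: "('m, 'z) cpc_scheme \<Rightarrow> bool" where
  "evaluation_map K \<longleftrightarrow>
     (\<forall>w w'. is_path K w \<longrightarrow> is_path K w' \<longrightarrow> chain_equiv w w' \<longrightarrow> Eps K w = Eps K w')
   \<and> (\<forall>w. is_path K w \<longrightarrow> Eps K w \<in> Mor K \<and> Dom K (Eps K w) = hd w \<and> Cod K (Eps K w) = last w)
   \<and> (\<forall>w w'. is_path K w \<longrightarrow> is_path K w' \<longrightarrow> last w = hd w' \<longrightarrow>
        Eps K (w @ tl w') = Comp K (Eps K w) (Eps K w'))
   \<and> (\<forall>w w'. is_path K w \<longrightarrow> is_path K w' \<longrightarrow> path_le_l K w w' \<longrightarrow> LeL K (Eps K w) (Eps K w'))
   \<and> (\<forall>w w'. is_path K w \<longrightarrow> is_path K w' \<longrightarrow> path_le_r K w w' \<longrightarrow> LeR K (Eps K w) (Eps K w'))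
   \<and> (\<forall>p\<in>Obj K. Eps K [p] = p)"

definition lam :: "('m, 'z) cpc_scheme \<Rightarrow> 'm \<Rightarrow> 'm \<Rightarrow> 'm \<Rightarrow> 'm" where
  "lam K p b s =
    (let q = Dom K b; e = Delta K p (BigDelta K b s);
         e1 = Delta K (Theta K q p) (BigDelta K b s);
         f = Theta K s (BigTheta K b p);
         f1 = Delta K (BigTheta K b p) s
     in Comp K (Comp K (Eps K [e, e1]) (rrest K (lrest K (Theta K q p) b) f1)) (Eps K [f1, f]))"

definition rho :: "('m, 'z) cpc_scheme \<Rightarrow> 'm \<Rightarrow> 'm \<Rightarrow> 'm \<Rightarrow> 'm" where
  "rho K p b s =
    (let r = Cod K b; e = Delta K p (BigDelta K b s);
         e2 = Theta K (BigDelta K b s) p;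
         f = Theta K s (BigTheta K b p);
         f2 = Theta K (Delta K r s) (BigTheta K b p)
     in Comp K (Comp K (Eps K [e, e2]) (lrest K e2 (rrest K b (Delta K r s)))) (Eps K [f2, f]))"

definition chained_projection_category :: "('m, 'z) cpc_scheme \<Rightarrow> bool" where
  "chained_projection_category K \<longleftrightarrow> projection_category K \<and> evaluation_map K
   \<and> (\<forall>b\<in>Mor K. \<forall>p\<in>Obj K. \<forall>s\<in>Obj K. lam K p b s = rho K p b s)"

definition star :: "('m, 'z) cpc_scheme \<Rightarrow> 'm \<Rightarrow> 'm \<Rightarrow> 'm" where
  "star K a b =
    (let p = Cod K a; q = Dom K b; p' = Delta K p q; q' = Theta K q p
     in Comp K (Comp K (rrest K a p') (Eps K [p', q'])) (lrest K q' b))"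

definition drc_semigroup :: "'a set \<Rightarrow> ('a \<Rightarrow> 'a \<Rightarrow> 'a) \<Rightarrow> ('a \<Rightarrow> 'a) \<Rightarrow> ('a \<Rightarrow> 'a) \<Rightarrow> bool" where
  "drc_semigroup S m D R \<longleftrightarrow>
     (\<forall>a\<in>S. \<forall>b\<in>S. m a b \<in> S)
   \<and> (\<forall>a\<in>S. D a \<in> S \<and> R a \<in> S)
   \<and> (\<forall>a\<in>S. \<forall>b\<in>S. \<forall>c\<in>S. m (m a b) c = m a (m b c))
   \<and> (\<forall>a\<in>S. m (D a) a = a \<and> m a (R a) = a)
   \<and> (\<forall>a\<in>S. \<forall>b\<in>S. D (m a b) = D (m a (D b)) \<and> R (m a b) = R (m (R a) b))
   \<and> (\<forall>a\<in>S. \<forall>b\<in>S. D (m a b) = m (m (D a) (D (m a b))) (D a)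
                 \<and> R (m a b) = m (m (R b) (R (m a b))) (R b))
   \<and> (\<forall>a\<in>S. R (D a) = D a \<and> D (R a) = R a)"

end

theory Submission
  imports Defs
begin


locale cpcl =
  fixes K :: "('m, 'z) cpc_scheme"
  assumes cpc: "chained_projection_category K"
begin

lemma pc: "projection_category K" using cpc unfolding chained_projection_category_def by (elim conjE) assumption
lemma ev: "evaluation_map K" using cpc unfolding chained_projection_category_def by (elim conjE) assumption
lemma C2': "\<forall>b\<in>Mor K. \<forall>p\<in>Obj K. \<forall>s\<in>Obj K. lam K p b s = rho K p b s"
  using cpc unfolding chained_projection_category_def by (elim conjE) assumption
lemma C2: "b \<in> Mor K \<Longrightarrow> p \<in> Obj K \<Longrightarrow> s \<in> Obj K \<Longrightarrow> lam K p b s = rho K p b s"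
  using C2' by simp
lemma wpc: "weak_projection_category K" using pc unfolding projection_category_def by (elim conjE) assumption
lemma bio: "biordered K" using wpc unfolding weak_projection_category_def by (elim conjE) assumption
lemma LO: "left_ordered K" using bio unfolding biordered_def by (elim conjE) assumption
lemma RO: "right_ordered K" using bio unfolding biordered_def by (elim conjE) assumption
lemma cat: "is_category K" using LO unfolding left_ordered_def by (elim conjE) assumption
lemma PA: "projection_algebra (Obj K) (Theta K) (Delta K)"
  using wpc unfolding weak_projection_category_def by (elim conjE) assumption
lemma ordeq: "\<forall>p\<in>Obj K. \<forall>q\<in>Obj K. (pa_le K p q \<longleftrightarrow> LeL K p q) \<and> (pa_le K p q \<longleftrightarrow> LeR K p q)"
  using wpc unfolding weak_projection_category_def by (elim conjE) assumption
lemma le_LeL: "p \<in> Obj K \<Longrightarrow> q \<in> Obj K \<Longrightarrow> pa_le K p q \<longleftrightarrow> LeL K p q"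
  using ordeq by blast
lemma le_LeR: "p \<in> Obj K \<Longrightarrow> q \<in> Obj K \<Longrightarrow> pa_le K p q \<longleftrightarrow> LeR K p q"
  using ordeq by blast

lemma C1a': "\<forall>a\<in>Mor K. \<forall>q\<in>Obj K. pa_le K q (Cod K a) \<longrightarrow>
        (\<forall>x\<in>Obj K. BigTheta K (rrest K a q) x = Theta K q (BigTheta K a x))"
  using pc unfolding projection_category_def by (elim conjE) assumption
lemma C1b': "\<forall>a\<in>Mor K. \<forall>p\<in>Obj K. pa_le K p (Dom K a) \<longrightarrow>
        (\<forall>x\<in>Obj K. BigDelta K (lrest K p a) x = Delta K p (BigDelta K a x))"
  using pc unfolding projection_category_def by (elim conjE) assumption
lemma C1a: "a \<in> Mor K \<Longrightarrow> q \<in> Obj K \<Longrightarrow> pa_le K q (Cod K a) \<Longrightarrow> x \<in> Obj K \<Longrightarrow>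
   BigTheta K (rrest K a q) x = Theta K q (BigTheta K a x)"
  using C1a' by simp
lemma C1b: "a \<in> Mor K \<Longrightarrow> p \<in> Obj K \<Longrightarrow> pa_le K p (Dom K a) \<Longrightarrow> x \<in> Obj K \<Longrightarrow>
   BigDelta K (lrest K p a) x = Delta K p (BigDelta K a x)"
  using C1b' by simp

lemma cat1: "\<forall>a\<in>Mor K. Dom K a \<in> Mor K \<and> Cod K a \<in> Mor K
        \<and> Dom K (Dom K a) = Dom K a \<and> Cod K (Dom K a) = Dom K a
        \<and> Dom K (Cod K a) = Cod K a \<and> Cod K (Cod K a) = Cod K a
        \<and> Comp K (Dom K a) a = a \<and> Comp K a (Cod K a) = a"
  using cat unfolding is_category_def by (elim conjE) assumption
lemma cat2: "\<forall>a\<in>Mor K. \<forall>b\<in>Mor K. Cod K a = Dom K b \<longrightarrow>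
        Comp K a b \<in> Mor K \<and> Dom K (Comp K a b) = Dom K a \<and> Cod K (Comp K a b) = Cod K b"
  using cat unfolding is_category_def by (elim conjE) assumption
lemma cat3: "\<forall>a\<in>Mor K. \<forall>b\<in>Mor K. \<forall>c\<in>Mor K. Cod K a = Dom K b \<longrightarrow> Cod K b = Dom K c \<longrightarrow>
        Comp K (Comp K a b) c = Comp K a (Comp K b c)"
  using cat unfolding is_category_def by (elim conjE) assumption

lemma dom_in[simp]: "a \<in> Mor K \<Longrightarrow> Dom K a \<in> Mor K" using cat1 by simp
lemma cod_in[simp]: "a \<in> Mor K \<Longrightarrow> Cod K a \<in> Mor K" using cat1 by simp
lemma dom_dom[simp]: "a \<in> Mor K \<Longrightarrow> Dom K (Dom K a) = Dom K a" using cat1 by simp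
lemma cod_dom[simp]: "a \<in> Mor K \<Longrightarrow> Cod K (Dom K a) = Dom K a" using cat1 by simp
lemma dom_cod[simp]: "a \<in> Mor K \<Longrightarrow> Dom K (Cod K a) = Cod K a" using cat1 by simp
lemma cod_cod[simp]: "a \<in> Mor K \<Longrightarrow> Cod K (Cod K a) = Cod K a" using cat1 by simp
lemma comp_dom[simp]: "a \<in> Mor K \<Longrightarrow> Comp K (Dom K a) a = a" using cat1 by simp
lemma comp_cod[simp]: "a \<in> Mor K \<Longrightarrow> Comp K a (Cod K a) = a" using cat1 by simp
lemma comp_in[simp]: "a \<in> Mor K \<Longrightarrow> b \<in> Mor K \<Longrightarrow> Cod K a = Dom K b \<Longrightarrow> Comp K a b \<in> Mor K"
  using cat2 by simp
lemma dom_comp[simp]: "a \<in> Mor K \<Longrightarrow> b \<in> Mor K \<Longrightarrow> Cod K a = Dom K b \<Longrightarrow> Dom K (Comp K a b) = Dom K a"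
  using cat2 by simp
lemma cod_comp[simp]: "a \<in> Mor K \<Longrightarrow> b \<in> Mor K \<Longrightarrow> Cod K a = Dom K b \<Longrightarrow> Cod K (Comp K a b) = Cod K b"
  using cat2 by simp
lemma comp_assoc: "a \<in> Mor K \<Longrightarrow> b \<in> Mor K \<Longrightarrow> c \<in> Mor K \<Longrightarrow> Cod K a = Dom K b \<Longrightarrow> Cod K b = Dom K c \<Longrightarrow>
   Comp K (Comp K a b) c = Comp K a (Comp K b c)"
  using cat3 by simp

lemma dom_obj[simp]: "a \<in> Mor K \<Longrightarrow> Dom K a \<in> Obj K" unfolding Obj_def by simp
lemma cod_obj[simp]: "a \<in> Mor K \<Longrightarrow> Cod K a \<in> Obj K" unfolding Obj_def by simp
lemma obj_mor[simp]: "p \<in> Obj K \<Longrightarrow> p \<in> Mor K" unfolding Obj_def by simp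
lemma obj_dom[simp]: "p \<in> Obj K \<Longrightarrow> Dom K p = p" unfolding Obj_def by simp
lemma obj_cod[simp]: "p \<in> Obj K \<Longrightarrow> Cod K p = p"
  unfolding Obj_def by (metis (mono_tags, lifting) cod_dom mem_Collect_eq)
lemma comp_obj[simp]: "p \<in> Obj K \<Longrightarrow> Comp K p p = p"
  by (metis comp_dom obj_dom obj_mor)

lemma LOp: "partial_order_on' (Mor K) (LeL K)" using LO unfolding left_ordered_def by (elim conjE) assumption
lemma LO3: "\<forall>a\<in>Mor K. \<forall>b\<in>Mor K. LeL K a b \<longrightarrow>
        LeL K (Dom K a) (Dom K b) \<and> LeL K (Cod K a) (Cod K b)" using LO unfolding left_ordered_def by (elim conjE) assumption
lemma LO4: "\<forall>a\<in>Mor K. \<forall>b\<in>Mor K. \<forall>c\<in>Mor K. \<forall>c'\<in>Mor K.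
        LeL K a b \<longrightarrow> LeL K c c' \<longrightarrow> Cod K a = Dom K c \<longrightarrow> Cod K b = Dom K c' \<longrightarrow>
        LeL K (Comp K a c) (Comp K b c')" using LO unfolding left_ordered_def by (elim conjE) assumption
lemma LO5: "\<forall>a\<in>Mor K. \<forall>p\<in>Obj K. LeL K p (Dom K a) \<longrightarrow>
        (\<exists>!u. u \<in> Mor K \<and> LeL K u a \<and> Dom K u = p)" using LO unfolding left_ordered_def by (elim conjE) assumption
lemma ROp: "partial_order_on' (Mor K) (LeR K)" using RO unfolding right_ordered_def by (elim conjE) assumption
lemma RO3: "\<forall>a\<in>Mor K. \<forall>b\<in>Mor K. LeR K a b \<longrightarrow>
        LeR K (Dom K a) (Dom K b) \<and> LeR K (Cod K a) (Cod K b)" using RO unfolding right_ordered_def by (elim conjE) assumption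
lemma RO4: "\<forall>a\<in>Mor K. \<forall>b\<in>Mor K. \<forall>c\<in>Mor K. \<forall>c'\<in>Mor K.
        LeR K a b \<longrightarrow> LeR K c c' \<longrightarrow> Cod K a = Dom K c \<longrightarrow> Cod K b = Dom K c' \<longrightarrow>
        LeR K (Comp K a c) (Comp K b c')" using RO unfolding right_ordered_def by (elim conjE) assumption
lemma RO5: "\<forall>a\<in>Mor K. \<forall>q\<in>Obj K. LeR K q (Cod K a) \<longrightarrow>
        (\<exists>!v. v \<in> Mor K \<and> LeR K v a \<and> Cod K v = q)" using RO unfolding right_ordered_def by (elim conjE) assumption

lemma LeL_refl: "a \<in> Mor K \<Longrightarrow> LeL K a a" using LOp unfolding partial_order_on'_def by simp
lemma LeL_trans: "a \<in> Mor K \<Longrightarrow> b \<in> Mor K \<Longrightarrow> c \<in> Mor K \<Longrightarrow> LeL K a b \<Longrightarrow> LeL K b c \<Longrightarrow> LeL K a c"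
  using LOp unfolding partial_order_on'_def by blast
lemma LeL_dom: "a \<in> Mor K \<Longrightarrow> b \<in> Mor K \<Longrightarrow> LeL K a b \<Longrightarrow> LeL K (Dom K a) (Dom K b)"
  using LO3 by simp
lemma LeL_cod: "a \<in> Mor K \<Longrightarrow> b \<in> Mor K \<Longrightarrow> LeL K a b \<Longrightarrow> LeL K (Cod K a) (Cod K b)"
  using LO3 by simp
lemma LeL_comp: "a \<in> Mor K \<Longrightarrow> b \<in> Mor K \<Longrightarrow> c \<in> Mor K \<Longrightarrow> c' \<in> Mor K \<Longrightarrow>
  LeL K a b \<Longrightarrow> LeL K c c' \<Longrightarrow> Cod K a = Dom K c \<Longrightarrow> Cod K b = Dom K c' \<Longrightarrow> LeL K (Comp K a c) (Comp K b c')"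
  using LO4 by simp
lemma LeL_ex1: "a \<in> Mor K \<Longrightarrow> p \<in> Obj K \<Longrightarrow> LeL K p (Dom K a) \<Longrightarrow> \<exists>!u. u \<in> Mor K \<and> LeL K u a \<and> Dom K u = p"
  using LO5 by simp

lemma LeR_refl: "a \<in> Mor K \<Longrightarrow> LeR K a a" using ROp unfolding partial_order_on'_def by simp
lemma LeR_trans: "a \<in> Mor K \<Longrightarrow> b \<in> Mor K \<Longrightarrow> c \<in> Mor K \<Longrightarrow> LeR K a b \<Longrightarrow> LeR K b c \<Longrightarrow> LeR K a c"
  using ROp unfolding partial_order_on'_def by blast
lemma LeR_dom: "a \<in> Mor K \<Longrightarrow> b \<in> Mor K \<Longrightarrow> LeR K a b \<Longrightarrow> LeR K (Dom K a) (Dom K b)"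
  using RO3 by simp
lemma LeR_cod: "a \<in> Mor K \<Longrightarrow> b \<in> Mor K \<Longrightarrow> LeR K a b \<Longrightarrow> LeR K (Cod K a) (Cod K b)"
  using RO3 by simp
lemma LeR_comp: "a \<in> Mor K \<Longrightarrow> b \<in> Mor K \<Longrightarrow> c \<in> Mor K \<Longrightarrow> c' \<in> Mor K \<Longrightarrow>
  LeR K a b \<Longrightarrow> LeR K c c' \<Longrightarrow> Cod K a = Dom K c \<Longrightarrow> Cod K b = Dom K c' \<Longrightarrow> LeR K (Comp K a c) (Comp K b c')"
  using RO4 by simp
lemma LeR_ex1: "a \<in> Mor K \<Longrightarrow> q \<in> Obj K \<Longrightarrow> LeR K q (Cod K a) \<Longrightarrow> \<exists>!v. v \<in> Mor K \<and> LeR K v a \<and> Cod K v = q"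
  using RO5 by simp

lemma le_refl: "p \<in> Obj K \<Longrightarrow> pa_le K p p" by (simp add: LeL_refl le_LeL)
lemma le_trans: "p \<in> Obj K \<Longrightarrow> q \<in> Obj K \<Longrightarrow> r \<in> Obj K \<Longrightarrow> pa_le K p q \<Longrightarrow> pa_le K q r \<Longrightarrow> pa_le K p r"
  by (meson LeL_trans le_LeL obj_mor)

subsection \<open>Restrictions\<close>

lemma lrest:
  assumes "a \<in> Mor K" "p \<in> Obj K" "pa_le K p (Dom K a)"
  shows "lrest K p a \<in> Mor K \<and> LeL K (lrest K p a) a \<and> Dom K (lrest K p a) = p"
proof -
  have "\<exists>!u. u \<in> Mor K \<and> LeL K u a \<and> Dom K u = p"
    using LeL_ex1 assms le_LeL by simp
  then show ?thesis unfolding lrest_def by (rule theI')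
qed

lemma lrest_in[simp]: "a \<in> Mor K \<Longrightarrow> p \<in> Obj K \<Longrightarrow> pa_le K p (Dom K a) \<Longrightarrow> lrest K p a \<in> Mor K"
  using lrest by blast
lemma dom_lrest[simp]: "a \<in> Mor K \<Longrightarrow> p \<in> Obj K \<Longrightarrow> pa_le K p (Dom K a) \<Longrightarrow> Dom K (lrest K p a) = p"
  using lrest by blast
lemma lrest_LeL: "a \<in> Mor K \<Longrightarrow> p \<in> Obj K \<Longrightarrow> pa_le K p (Dom K a) \<Longrightarrow> LeL K (lrest K p a) a"
  using lrest by blast

lemma lrest_unique:
  assumes "a \<in> Mor K" "u \<in> Mor K" "LeL K u a" "Dom K u = p"
  shows "lrest K p a = u"
proof -
  have le: "LeL K p (Dom K a)" using LeL_dom assms by blast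
  have p: "p \<in> Obj K" using assms(2,4) dom_obj by blast
  have ex: "\<exists>!u. u \<in> Mor K \<and> LeL K u a \<and> Dom K u = p"
    using LeL_ex1[OF assms(1) p le] .
  show ?thesis unfolding lrest_def by (rule the1_equality[OF ex]) (use assms in simp)
qed

lemma cod_lrest_le: "a \<in> Mor K \<Longrightarrow> p \<in> Obj K \<Longrightarrow> pa_le K p (Dom K a) \<Longrightarrow> pa_le K (Cod K (lrest K p a)) (Cod K a)"
  using LeL_cod[of "lrest K p a" a] lrest[of a p] le_LeL[of "Cod K (lrest K p a)" "Cod K a"] by simp

lemma lrest_dom[simp]: "a \<in> Mor K \<Longrightarrow> lrest K (Dom K a) a = a"
  by (rule lrest_unique) (simp_all add: LeL_refl)

lemma lrest_obj: "q \<in> Obj K \<Longrightarrow> p \<in> Obj K \<Longrightarrow> pa_le K p q \<Longrightarrow> lrest K p q = p"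
  by (rule lrest_unique) (simp_all add: le_LeL)

lemma lrest_lrest:
  assumes "a \<in> Mor K" "p \<in> Obj K" "p2 \<in> Obj K" "pa_le K p p2" "pa_le K p2 (Dom K a)"
  shows "lrest K p (lrest K p2 a) = lrest K p a"
proof -
  have le: "pa_le K p (Dom K a)" using assms le_trans[of p p2 "Dom K a"] by simp
  have 1: "lrest K p2 a \<in> Mor K" "LeL K (lrest K p2 a) a" "Dom K (lrest K p2 a) = p2"
    using lrest[of a p2] assms by auto
  have 2: "lrest K p (lrest K p2 a) \<in> Mor K" "LeL K (lrest K p (lrest K p2 a)) (lrest K p2 a)"
     "Dom K (lrest K p (lrest K p2 a)) = p"
    using lrest[of "lrest K p2 a" p] 1 assms by auto
  have "LeL K (lrest K p (lrest K p2 a)) a" using LeL_trans 1 2 assms(1) by blast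
  then show ?thesis using lrest_unique[of a "lrest K p (lrest K p2 a)" p] 2 assms(1) by simp
qed

lemma lrest_comp:
  assumes "a \<in> Mor K" "b \<in> Mor K" "Cod K a = Dom K b" "p \<in> Obj K" "pa_le K p (Dom K a)"
  shows "lrest K p (Comp K a b) = Comp K (lrest K p a) (lrest K (Cod K (lrest K p a)) b)"
proof -
  let ?u = "lrest K p a"
  have u: "?u \<in> Mor K" "LeL K ?u a" "Dom K ?u = p" using lrest assms by blast+
  have le: "pa_le K (Cod K ?u) (Dom K b)" using cod_lrest_le[OF assms(1,4,5)] assms(3) by simp
  let ?v = "lrest K (Cod K ?u) b"
  have v: "?v \<in> Mor K" "LeL K ?v b" "Dom K ?v = Cod K ?u" using lrest[of b "Cod K ?u"] assms u le by auto
  have "LeL K (Comp K ?u ?v) (Comp K a b)" using LeL_comp u v assms by simp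
  moreover have "Comp K ?u ?v \<in> Mor K" using u v by simp
  moreover have "Dom K (Comp K ?u ?v) = p" using u v by simp
  moreover have "Comp K a b \<in> Mor K" using assms by simp
  ultimately show ?thesis using lrest_unique by blast
qed

lemma rrest:
  assumes "a \<in> Mor K" "q \<in> Obj K" "pa_le K q (Cod K a)"
  shows "rrest K a q \<in> Mor K \<and> LeR K (rrest K a q) a \<and> Cod K (rrest K a q) = q"
proof -
  have "\<exists>!u. u \<in> Mor K \<and> LeR K u a \<and> Cod K u = q"
    using LeR_ex1 assms le_LeR by simp
  then show ?thesis unfolding rrest_def by (rule theI')
qed

lemma rrest_in[simp]: "a \<in> Mor K \<Longrightarrow> q \<in> Obj K \<Longrightarrow> pa_le K q (Cod K a) \<Longrightarrow> rrest K a q \<in> Mor K"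
  using rrest by blast
lemma cod_rrest[simp]: "a \<in> Mor K \<Longrightarrow> q \<in> Obj K \<Longrightarrow> pa_le K q (Cod K a) \<Longrightarrow> Cod K (rrest K a q) = q"
  using rrest by blast
lemma rrest_LeR: "a \<in> Mor K \<Longrightarrow> q \<in> Obj K \<Longrightarrow> pa_le K q (Cod K a) \<Longrightarrow> LeR K (rrest K a q) a"
  using rrest by blast

lemma rrest_unique:
  assumes "a \<in> Mor K" "u \<in> Mor K" "LeR K u a" "Cod K u = q"
  shows "rrest K a q = u"
proof -
  have le: "LeR K q (Cod K a)" using LeR_cod assms by blast
  have q: "q \<in> Obj K" using assms(2,4) cod_obj by blast
  have ex: "\<exists>!u. u \<in> Mor K \<and> LeR K u a \<and> Cod K u = q"
    using LeR_ex1[OF assms(1) q le] .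
  show ?thesis unfolding rrest_def by (rule the1_equality[OF ex]) (use assms in simp)
qed

lemma dom_rrest_le: "a \<in> Mor K \<Longrightarrow> q \<in> Obj K \<Longrightarrow> pa_le K q (Cod K a) \<Longrightarrow> pa_le K (Dom K (rrest K a q)) (Dom K a)"
  using LeR_dom[of "rrest K a q" a] rrest[of a q] le_LeR[of "Dom K (rrest K a q)" "Dom K a"] by simp

lemma rrest_cod[simp]: "a \<in> Mor K \<Longrightarrow> rrest K a (Cod K a) = a"
  by (rule rrest_unique) (simp_all add: LeR_refl)

lemma rrest_obj: "q \<in> Obj K \<Longrightarrow> p \<in> Obj K \<Longrightarrow> pa_le K p q \<Longrightarrow> rrest K q p = p"
  by (rule rrest_unique) (simp_all add: le_LeR)

lemma rrest_rrest:
  assumes "a \<in> Mor K" "p \<in> Obj K" "p2 \<in> Obj K" "pa_le K p p2" "pa_le K p2 (Cod K a)"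
  shows "rrest K (rrest K a p2) p = rrest K a p"
proof -
  have 1: "rrest K a p2 \<in> Mor K" "LeR K (rrest K a p2) a" "Cod K (rrest K a p2) = p2"
    using rrest[of a p2] assms by auto
  have 2: "rrest K (rrest K a p2) p \<in> Mor K" "LeR K (rrest K (rrest K a p2) p) (rrest K a p2)"
     "Cod K (rrest K (rrest K a p2) p) = p"
    using rrest[of "rrest K a p2" p] 1 assms by auto
  have "LeR K (rrest K (rrest K a p2) p) a" using LeR_trans 1 2 assms(1) by blast
  then show ?thesis using rrest_unique[of a "rrest K (rrest K a p2) p" p] 2 assms(1) by simp
qed

lemma rrest_comp:
  assumes "a \<in> Mor K" "b \<in> Mor K" "Cod K a = Dom K b" "q \<in> Obj K" "pa_le K q (Cod K b)"
  shows "rrest K (Comp K a b) q = Comp K (rrest K a (Dom K (rrest K b q))) (rrest K b q)"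
proof -
  let ?v = "rrest K b q"
  have v: "?v \<in> Mor K" "LeR K ?v b" "Cod K ?v = q" using rrest assms by blast+
  have le: "pa_le K (Dom K ?v) (Cod K a)" using dom_rrest_le[OF assms(2,4,5)] assms(3) by simp
  let ?u = "rrest K a (Dom K ?v)"
  have u: "?u \<in> Mor K" "LeR K ?u a" "Cod K ?u = Dom K ?v" using rrest[of a "Dom K ?v"] assms v le by auto
  have "LeR K (Comp K ?u ?v) (Comp K a b)" using LeR_comp u v assms by simp
  moreover have "Comp K ?u ?v \<in> Mor K" using u v by simp
  moreover have "Cod K (Comp K ?u ?v) = q" using u v by simp
  moreover have "Comp K a b \<in> Mor K" using assms by simp
  ultimately show ?thesis using rrest_unique by blast
qed

end



context cpcl
begin

subsection \<open>Projection algebra\<close>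

lemma th_in[simp]: "p \<in> Obj K \<Longrightarrow> x \<in> Obj K \<Longrightarrow> Theta K p x \<in> Obj K"
  using PA unfolding projection_algebra_def by blast
lemma de_in[simp]: "p \<in> Obj K \<Longrightarrow> x \<in> Obj K \<Longrightarrow> Delta K p x \<in> Obj K"
  using PA unfolding projection_algebra_def by blast
lemma th_self[simp]: "p \<in> Obj K \<Longrightarrow> Theta K p p = p"
  using PA unfolding projection_algebra_def by blast
lemma de_self[simp]: "p \<in> Obj K \<Longrightarrow> Delta K p p = p"
  using PA unfolding projection_algebra_def by blast
lemma A2t: "p \<in> Obj K \<Longrightarrow> q \<in> Obj K \<Longrightarrow> Theta K (Theta K p q) p = Theta K p q"
  using PA unfolding projection_algebra_def by blast
lemma A2d: "p \<in> Obj K \<Longrightarrow> q \<in> Obj K \<Longrightarrow> Delta K (Delta K p q) p = Delta K p q"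
  using PA unfolding projection_algebra_def by blast
lemma A3t: "p \<in> Obj K \<Longrightarrow> q \<in> Obj K \<Longrightarrow> x \<in> Obj K \<Longrightarrow>
   Theta K (Theta K p q) (Theta K q x) = Theta K p (Theta K q x)"
  using PA unfolding projection_algebra_def by blast
lemma A3d: "p \<in> Obj K \<Longrightarrow> q \<in> Obj K \<Longrightarrow> x \<in> Obj K \<Longrightarrow>
   Delta K (Delta K p q) (Delta K q x) = Delta K p (Delta K q x)"
  using PA unfolding projection_algebra_def by blast
lemma A4a: "p \<in> Obj K \<Longrightarrow> x \<in> Obj K \<Longrightarrow> Delta K p (Theta K p x) = Theta K p x"
  using PA unfolding projection_algebra_def by blast
lemma A4b: "p \<in> Obj K \<Longrightarrow> x \<in> Obj K \<Longrightarrow> Theta K p (Delta K p x) = Delta K p x"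
  using PA unfolding projection_algebra_def by blast
lemma A5t: "p \<in> Obj K \<Longrightarrow> q \<in> Obj K \<Longrightarrow> x \<in> Obj K \<Longrightarrow>
   Theta K p (Theta K (Delta K q p) x) = Theta K p (Theta K q x)"
  using PA unfolding projection_algebra_def by blast
lemma A5d: "p \<in> Obj K \<Longrightarrow> q \<in> Obj K \<Longrightarrow> x \<in> Obj K \<Longrightarrow>
   Delta K p (Delta K (Theta K q p) x) = Delta K p (Delta K q x)"
  using PA unfolding projection_algebra_def by blast

lemma th_idem[simp]: "p \<in> Obj K \<Longrightarrow> x \<in> Obj K \<Longrightarrow> Theta K p (Theta K p x) = Theta K p x"
  by (metis A4a A4b th_in)
lemma de_idem[simp]: "p \<in> Obj K \<Longrightarrow> x \<in> Obj K \<Longrightarrow> Delta K p (Delta K p x) = Delta K p x"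
  by (metis A4a A4b de_in)

lemma le_th: "p \<in> Obj K \<Longrightarrow> x \<in> Obj K \<Longrightarrow> pa_le K (Theta K p x) p"
  by (simp add: pa_le_def)
lemma le_de: "p \<in> Obj K \<Longrightarrow> x \<in> Obj K \<Longrightarrow> pa_le K (Delta K p x) p"
  by (simp add: pa_le_def A4b)
lemma le_th_eq: "pa_le K x p \<Longrightarrow> Theta K p x = x"
  by (simp add: pa_le_def)
lemma le_de_eq: "p \<in> Obj K \<Longrightarrow> x \<in> Obj K \<Longrightarrow> pa_le K x p \<Longrightarrow> Delta K p x = x"
  by (metis A4a le_th_eq)
lemma le_th_rev: "p \<in> Obj K \<Longrightarrow> x \<in> Obj K \<Longrightarrow> pa_le K x p \<Longrightarrow> Theta K x p = x"
  by (metis A2t le_th_eq)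
lemma le_de_rev: "p \<in> Obj K \<Longrightarrow> x \<in> Obj K \<Longrightarrow> pa_le K x p \<Longrightarrow> Delta K x p = x"
  by (metis A2d le_de_eq)

lemma F_basic:
  assumes p: "p \<in> Obj K" and q: "q \<in> Obj K"
  shows "pa_F K (Delta K p q) (Theta K q p)"
proof -
  let ?a = "Delta K p q" and ?b = "Theta K q p"
  have a: "?a \<in> Obj K" and b: "?b \<in> Obj K" using p q by auto
  have bq: "pa_le K ?b q" using le_th p q by blast
  have ap: "pa_le K ?a p" using le_de p q by blast
  have "Delta K ?a ?b = Delta K ?a (Delta K q ?b)" using le_de_eq bq b q by simp
  also have "\<dots> = Delta K p (Delta K q ?b)" using A3d p q b by simp
  also have "\<dots> = Delta K p ?b" using le_de_eq bq b q by simp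
  also have "\<dots> = Delta K p (Delta K (Theta K q p) q)" using le_de_rev bq b q by simp
  also have "\<dots> = Delta K p (Delta K q q)" using A5d p q by simp
  also have "\<dots> = ?a" using q by simp
  finally have 1: "?a = Delta K ?a ?b" by simp
  have "Theta K ?b ?a = Theta K ?b (Theta K p ?a)" using le_th_eq ap by simp
  also have "\<dots> = Theta K q (Theta K p ?a)" using A3t p q a by simp
  also have "\<dots> = Theta K q ?a" using le_th_eq ap by simp
  also have "\<dots> = Theta K q (Theta K (Delta K p q) p)" using le_th_rev ap a p by simp
  also have "\<dots> = Theta K q (Theta K p p)" using A5t p q by simp
  also have "\<dots> = ?b" using p by simp
  finally have 2: "?b = Theta K ?b ?a" by simp
  show ?thesis using 1 2 unfolding pa_F_def by simp
qed

lemma F_rrest: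
  assumes p: "p \<in> Obj K" and q: "q \<in> Obj K" and y: "y \<in> Obj K"
    and F: "pa_F K p q" and yq: "pa_le K y q"
  shows "pa_F K (Delta K p y) y"
proof -
  have 1: "Delta K (Delta K p y) y = Delta K p y"
    using A3d[of p y y] p y by simp
  have "Theta K y (Delta K p y) = Theta K y (Theta K (Delta K p y) p)"
    using le_th_rev[of p "Delta K p y"] le_de p y by simp
  also have "\<dots> = Theta K y p" using A5t[of y p p] p y by simp
  also have "\<dots> = Theta K y (Theta K (Delta K q y) p)" using le_de_eq[of q y] q y yq p by simp
  also have "\<dots> = Theta K y (Theta K q p)" using A5t[of y q p] p q y by simp
  also have "\<dots> = Theta K y q" using F unfolding pa_F_def by simp
  also have "\<dots> = y" using le_th_rev q y yq by simp
  finally show ?thesis using 1 unfolding pa_F_def by simp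
qed

lemma F_lrest:
  assumes p: "p \<in> Obj K" and q: "q \<in> Obj K" and x: "x \<in> Obj K"
    and F: "pa_F K p q" and xp: "pa_le K x p"
  shows "pa_F K x (Theta K q x)"
proof -
  have 1: "Theta K (Theta K q x) x = Theta K q x"
    using A3t[of q x x] q x by simp
  have "Delta K x (Theta K q x) = Delta K x (Delta K (Theta K q x) q)"
    using le_de_rev[of q "Theta K q x"] le_th q x by simp
  also have "\<dots> = Delta K x q" using A5d[of x q q] q x by simp
  also have "\<dots> = Delta K x (Delta K (Theta K p x) q)" using le_th_eq[of x p] xp x q by simp
  also have "\<dots> = Delta K x (Delta K p q)" using A5d[of x p q] p q x by simp
  also have "\<dots> = Delta K x p" using F unfolding pa_F_def by simp
  also have "\<dots> = x" using le_de_rev p x xp by simp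
  finally show ?thesis using 1 unfolding pa_F_def by simp
qed

lemma ident1:
  assumes p: "p \<in> Obj K" and q: "q \<in> Obj K" and x: "x \<in> Obj K" and xq: "pa_le K x q"
  shows "Delta K (Delta K p q) (Delta K (Theta K q p) x) = Delta K p x"
proof -
  let ?y = "Delta K (Theta K q p) x"
  have y: "?y \<in> Obj K" using p q x by simp
  have "pa_le K ?y q" using le_trans[of ?y "Theta K q p" q] le_de le_th p q x y by simp
  then have yy: "Delta K q ?y = ?y" using le_de_eq q y by blast
  have "Delta K (Delta K p q) ?y = Delta K (Delta K p q) (Delta K q ?y)" using yy by simp
  also have "\<dots> = Delta K p (Delta K q ?y)" using A3d p q y by simp
  also have "\<dots> = Delta K p ?y" using yy by simp
  also have "\<dots> = Delta K p (Delta K q x)" using A5d p q x by simp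
  also have "\<dots> = Delta K p x" using le_de_eq q x xq by simp
  finally show ?thesis .
qed

lemma ident2:
  assumes r: "r \<in> Obj K" and s: "s \<in> Obj K" and u: "u \<in> Obj K" and ur: "pa_le K u r"
  shows "Theta K (Theta K s r) (Theta K (Delta K r s) u) = Theta K s u"
proof -
  let ?y = "Theta K (Delta K r s) u"
  have y: "?y \<in> Obj K" using r s u by simp
  have "pa_le K ?y r" using le_trans[of ?y "Delta K r s" r] le_de le_th r s u y by simp
  then have yy: "Theta K r ?y = ?y" using le_th_eq by blast
  have "Theta K (Theta K s r) ?y = Theta K (Theta K s r) (Theta K r ?y)" using yy by simp
  also have "\<dots> = Theta K s (Theta K r ?y)" using A3t s r y by simp
  also have "\<dots> = Theta K s ?y" using yy by simp
  also have "\<dots> = Theta K s (Theta K r u)" using A5t s r u by simp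
  also have "\<dots> = Theta K s u" using le_th_eq ur by simp
  finally show ?thesis .
qed

end



context cpcl
begin

subsection \<open>Evaluation map\<close>

lemma ev1: "\<forall>w w'. is_path K w \<longrightarrow> is_path K w' \<longrightarrow> chain_equiv w w' \<longrightarrow> Eps K w = Eps K w'"
  using ev unfolding evaluation_map_def by (elim conjE) assumption
lemma ev2: "\<forall>w. is_path K w \<longrightarrow> Eps K w \<in> Mor K \<and> Dom K (Eps K w) = hd w \<and> Cod K (Eps K w) = last w"
  using ev unfolding evaluation_map_def by (elim conjE) assumption
lemma ev5: "\<forall>w w'. is_path K w \<longrightarrow> is_path K w' \<longrightarrow> path_le_l K w w' \<longrightarrow> LeL K (Eps K w) (Eps K w')"
  using ev unfolding evaluation_map_def by (elim conjE) assumption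
lemma ev6: "\<forall>w w'. is_path K w \<longrightarrow> is_path K w' \<longrightarrow> path_le_r K w w' \<longrightarrow> LeR K (Eps K w) (Eps K w')"
  using ev unfolding evaluation_map_def by (elim conjE) assumption
lemma ev7: "\<forall>p\<in>Obj K. Eps K [p] = p"
  using ev unfolding evaluation_map_def by (elim conjE) assumption

lemma path2: "x \<in> Obj K \<Longrightarrow> y \<in> Obj K \<Longrightarrow> pa_F K x y \<Longrightarrow> is_path K [x, y]"
  unfolding is_path_def by simp

lemma eps2:
  assumes "x \<in> Obj K" "y \<in> Obj K" "pa_F K x y"
  shows "Eps K [x, y] \<in> Mor K" "Dom K (Eps K [x, y]) = x" "Cod K (Eps K [x, y]) = y"
  using ev2 path2[OF assms] by auto

lemma eps_xx[simp]:
  assumes x: "x \<in> Obj K"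
  shows "Eps K [x, x] = x"
proof -
  have F: "pa_F K x x" unfolding pa_F_def using x by simp
  have d: "dup_step [x, x] [x]" unfolding dup_step_def
    by (rule exI[where x="[]"], rule exI[where x=x], rule exI[where x="[]"]) simp
  have "chain_equiv [x, x] [x]" unfolding chain_equiv_def
    by (rule r_into_rtranclp) (use d in simp)
  moreover have "is_path K [x]" unfolding is_path_def using x by simp
  ultimately have "Eps K [x, x] = Eps K [x]" using ev1 path2[OF x x F] by blast
  also have "\<dots> = x" using ev7 x by simp
  finally show ?thesis .
qed

lemma eps_rrest:
  assumes x: "x \<in> Obj K" and y: "y \<in> Obj K" and z: "z \<in> Obj K"
    and F: "pa_F K x y" and zy: "pa_le K z y"
  shows "rrest K (Eps K [x, y]) z = Eps K [Delta K x z, z]"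
proof -
  have F2: "pa_F K (Delta K x z) z" using F_rrest[OF x y z F zy] .
  have p1: "is_path K [Delta K x z, z]" using path2 F2 x z by simp
  have p2: "is_path K [x, y]" using path2 F x y by simp
  have "path_le_r K [Delta K x z, z] [x, y]"
    unfolding path_le_r_def rrest_path_def using z zy by simp
  then have "LeR K (Eps K [Delta K x z, z]) (Eps K [x, y])" using ev6 p1 p2 by blast
  then show ?thesis using rrest_unique eps2[OF x y F] eps2[of "Delta K x z" z] F2 x z by simp
qed

lemma eps_lrest:
  assumes x: "x \<in> Obj K" and y: "y \<in> Obj K" and z: "z \<in> Obj K"
    and F: "pa_F K x y" and zx: "pa_le K z x"
  shows "lrest K z (Eps K [x, y]) = Eps K [z, Theta K y z]"
proof -
  have F2: "pa_F K z (Theta K y z)" using F_lrest[OF x y z F zx] .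
  have p1: "is_path K [z, Theta K y z]" using path2 F2 y z by simp
  have p2: "is_path K [x, y]" using path2 F x y by simp
  have "path_le_l K [z, Theta K y z] [x, y]"
    unfolding path_le_l_def lrest_path_def using z zx by simp
  then have "LeL K (Eps K [z, Theta K y z]) (Eps K [x, y])" using ev5 p1 p2 by blast
  then show ?thesis using lrest_unique eps2[OF x y F] eps2[of z "Theta K y z"] F2 y z by simp
qed

subsection \<open>The product\<close>

lemma star_parts:
  assumes a: "a \<in> Mor K" and b: "b \<in> Mor K"
  defines "p' \<equiv> Delta K (Cod K a) (Dom K b)" and "q' \<equiv> Theta K (Dom K b) (Cod K a)"
  shows "star K a b = Comp K (Comp K (rrest K a p') (Eps K [p', q'])) (lrest K q' b)"
    "p' \<in> Obj K" "q' \<in> Obj K" "pa_le K p' (Cod K a)" "pa_le K q' (Dom K b)" "pa_F K p' q'"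
    "rrest K a p' \<in> Mor K" "Cod K (rrest K a p') = p'"
    "Eps K [p', q'] \<in> Mor K" "Dom K (Eps K [p', q']) = p'" "Cod K (Eps K [p', q']) = q'"
    "lrest K q' b \<in> Mor K" "Dom K (lrest K q' b) = q'"
proof -
  show "star K a b = Comp K (Comp K (rrest K a p') (Eps K [p', q'])) (lrest K q' b)"
    unfolding star_def Let_def p'_def q'_def ..
  show p: "p' \<in> Obj K" and q: "q' \<in> Obj K" using a b unfolding p'_def q'_def by simp_all
  show pl: "pa_le K p' (Cod K a)" unfolding p'_def using le_de a b by simp
  show ql: "pa_le K q' (Dom K b)" unfolding q'_def using le_th a b by simp
  show F: "pa_F K p' q'" unfolding p'_def q'_def using F_basic a b by simp
  show "rrest K a p' \<in> Mor K" "Cod K (rrest K a p') = p'" using a p pl by simp_all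
  show "Eps K [p', q'] \<in> Mor K" "Dom K (Eps K [p', q']) = p'" "Cod K (Eps K [p', q']) = q'"
    using eps2[OF p q F] by simp_all
  show "lrest K q' b \<in> Mor K" "Dom K (lrest K q' b) = q'" using b q ql by simp_all
qed

lemma star_in[simp]: "a \<in> Mor K \<Longrightarrow> b \<in> Mor K \<Longrightarrow> star K a b \<in> Mor K"
  using star_parts[of a b] by simp

lemma dom_star: "a \<in> Mor K \<Longrightarrow> b \<in> Mor K \<Longrightarrow>
   Dom K (star K a b) = Dom K (rrest K a (Delta K (Cod K a) (Dom K b)))"
  using star_parts[of a b] by simp

lemma cod_star: "a \<in> Mor K \<Longrightarrow> b \<in> Mor K \<Longrightarrow>
   Cod K (star K a b) = Cod K (lrest K (Theta K (Dom K b) (Cod K a)) b)"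
  using star_parts[of a b] by simp

lemma star_le_dom: "a \<in> Mor K \<Longrightarrow> b \<in> Mor K \<Longrightarrow> pa_le K (Dom K (star K a b)) (Dom K a)"
  using star_parts[of a b] dom_star[of a b] dom_rrest_le by simp

lemma star_le_cod: "a \<in> Mor K \<Longrightarrow> b \<in> Mor K \<Longrightarrow> pa_le K (Cod K (star K a b)) (Cod K b)"
  using star_parts[of a b] cod_star[of a b] cod_lrest_le by simp

lemma P3a:
  assumes a: "a \<in> Mor K" and w: "w \<in> Mor K" and le: "pa_le K (Dom K w) (Cod K a)"
  shows "star K a w = Comp K (rrest K a (Dom K w)) w"
proof -
  have 1: "Delta K (Cod K a) (Dom K w) = Dom K w" using le_de_eq le a w by simp
  have 2: "Theta K (Dom K w) (Cod K a) = Dom K w" using le_th_rev le a w by simp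
  have 3: "Comp K (rrest K a (Dom K w)) (Dom K w) = rrest K a (Dom K w)"
    using comp_cod[of "rrest K a (Dom K w)"] cod_rrest[of a "Dom K w"] a w le by simp
  show ?thesis using star_parts(1)[OF a w] 1 2 3 a w le by simp
qed

lemma P3b:
  assumes w: "w \<in> Mor K" and b: "b \<in> Mor K" and le: "pa_le K (Cod K w) (Dom K b)"
  shows "star K w b = Comp K w (lrest K (Cod K w) b)"
proof -
  have 1: "Delta K (Cod K w) (Dom K b) = Cod K w" using le_de_rev le w b by simp
  have 2: "Theta K (Dom K b) (Cod K w) = Cod K w" using le_th_eq le by simp
  have 3: "lrest K (Cod K w) b \<in> Mor K" "Dom K (lrest K (Cod K w) b) = Cod K w" using w b le by simp_all
  show ?thesis using star_parts(1)[OF w b] 1 2 3 w b by simp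
qed

lemma P1:
  assumes "a \<in> Mor K" "b \<in> Mor K" "Cod K a = Dom K b"
  shows "star K a b = Comp K a b"
proof -
  have "rrest K a (Dom K b) = a" using rrest_cod[of a] assms by metis
  then show ?thesis using P3a[of a b] le_refl[of "Dom K b"] assms by simp
qed

lemma P2:
  assumes x: "x \<in> Mor K" and y: "y \<in> Mor K" and z: "z \<in> Mor K" and xy: "Cod K x = Dom K y"
  shows "star K (Comp K x y) z = star K x (star K y z)"
proof -
  define p' where "p' = Delta K (Cod K y) (Dom K z)"
  define q' where "q' = Theta K (Dom K z) (Cod K y)"
  note sp = star_parts[OF y z, folded p'_def q'_def]
  let ?A = "rrest K y p'" and ?E = "Eps K [p', q']" and ?B = "lrest K q' z"
  have xyM: "Comp K x y \<in> Mor K" using x y xy by simp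
  have "star K (Comp K x y) z = Comp K (Comp K (rrest K (Comp K x y) p') ?E) ?B"
    using star_parts(1)[OF xyM z] x y xy unfolding p'_def q'_def by simp
  also have "rrest K (Comp K x y) p' = Comp K (rrest K x (Dom K ?A)) ?A"
    using rrest_comp[OF x y xy] sp y by simp
  finally have L: "star K (Comp K x y) z = Comp K (Comp K (Comp K (rrest K x (Dom K ?A)) ?A) ?E) ?B" .
  have dA: "pa_le K (Dom K ?A) (Cod K x)" using dom_rrest_le[of y p'] sp y xy by simp
  have X: "rrest K x (Dom K ?A) \<in> Mor K" "Cod K (rrest K x (Dom K ?A)) = Dom K ?A"
    using x dA sp y by simp_all
  have dyz: "Dom K (star K y z) = Dom K ?A" using sp by simp
  have "star K x (star K y z) = Comp K (rrest K x (Dom K ?A)) (star K y z)"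
    using P3a[of x "star K y z"] x y z dyz dA by simp
  also have "\<dots> = Comp K (rrest K x (Dom K ?A)) (Comp K (Comp K ?A ?E) ?B)" using sp by simp
  finally show ?thesis using L X sp comp_assoc by simp
qed

lemma P2':
  assumes x: "x \<in> Mor K" and y: "y \<in> Mor K" and z: "z \<in> Mor K" and yz: "Cod K y = Dom K z"
  shows "star K x (Comp K y z) = star K (star K x y) z"
proof -
  define p' where "p' = Delta K (Cod K x) (Dom K y)"
  define q' where "q' = Theta K (Dom K y) (Cod K x)"
  note sp = star_parts[OF x y, folded p'_def q'_def]
  let ?A = "rrest K x p'" and ?E = "Eps K [p', q']" and ?B = "lrest K q' y"
  have yzM: "Comp K y z \<in> Mor K" using z y yz by simp
  have "star K x (Comp K y z) = Comp K (Comp K ?A ?E) (lrest K q' (Comp K y z))"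
    using star_parts(1)[OF x yzM] z y yz unfolding p'_def q'_def by simp
  also have "lrest K q' (Comp K y z) = Comp K ?B (lrest K (Cod K ?B) z)"
    using lrest_comp[OF y z yz] sp y by simp
  finally have L: "star K x (Comp K y z) = Comp K (Comp K ?A ?E) (Comp K ?B (lrest K (Cod K ?B) z))" .
  have dB: "pa_le K (Cod K ?B) (Dom K z)" using cod_lrest_le[of y q'] sp y yz by simp
  have Z: "lrest K (Cod K ?B) z \<in> Mor K" "Dom K (lrest K (Cod K ?B) z) = Cod K ?B"
    using z dB sp y by simp_all
  have cxy: "Cod K (star K x y) = Cod K ?B" using sp by simp
  have "star K (star K x y) z = Comp K (star K x y) (lrest K (Cod K ?B) z)"
    using P3b[of "star K x y" z] x y z cxy dB by simp
  also have "\<dots> = Comp K (Comp K (Comp K ?A ?E) ?B) (lrest K (Cod K ?B) z)" using sp by simp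
  finally show ?thesis using L Z sp comp_assoc by simp
qed

end



context cpcl
begin

lemma star_obj_left:
  assumes p: "p \<in> Obj K" and b: "b \<in> Mor K"
  shows "star K p b = Comp K (Eps K [Delta K p (Dom K b), Theta K (Dom K b) p]) (lrest K (Theta K (Dom K b) p) b)"
proof -
  note sp = star_parts[OF obj_mor[OF p] b]
  have "rrest K p (Delta K p (Dom K b)) = Delta K p (Dom K b)"
    using rrest_obj[of p "Delta K p (Dom K b)"] le_de p b by simp
  moreover have "Comp K (Delta K p (Dom K b)) (Eps K [Delta K p (Dom K b), Theta K (Dom K b) p])
      = Eps K [Delta K p (Dom K b), Theta K (Dom K b) p]"
    using comp_dom[of "Eps K [Delta K p (Dom K b), Theta K (Dom K b) p]"] sp(9,10) p by (metis obj_cod)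
  ultimately show ?thesis using sp p by simp
qed

lemma star_obj_right:
  assumes b: "b \<in> Mor K" and s: "s \<in> Obj K"
  shows "star K b s = Comp K (rrest K b (Delta K (Cod K b) s)) (Eps K [Delta K (Cod K b) s, Theta K s (Cod K b)])"
proof -
  note sp = star_parts[OF b obj_mor[OF s]]
  have "lrest K (Theta K s (Cod K b)) s = Theta K s (Cod K b)"
    using lrest_obj[of s "Theta K s (Cod K b)"] le_th s b by simp
  moreover have "Comp K (Comp K (rrest K b (Delta K (Cod K b) s)) (Eps K [Delta K (Cod K b) s, Theta K s (Cod K b)])) (Theta K s (Cod K b))
      = Comp K (rrest K b (Delta K (Cod K b) s)) (Eps K [Delta K (Cod K b) s, Theta K s (Cod K b)])"
    using comp_cod[of "Comp K (rrest K b (Delta K (Cod K b) s)) (Eps K [Delta K (Cod K b) s, Theta K s (Cod K b)])"] sp(7,8,9,10,11) s by (metis comp_in cod_comp obj_dom)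
  ultimately show ?thesis using sp s by simp
qed

lemma core:
  assumes p: "p \<in> Obj K" and b: "b \<in> Mor K" and s: "s \<in> Obj K"
  shows "star K (star K p b) s = star K p (star K b s)"
proof -
  define q where "q = Dom K b"
  define r where "r = Cod K b"
  have q: "q \<in> Obj K" and r: "r \<in> Obj K" using b q_def r_def by simp_all
  define x where "x = BigDelta K b s"
  define t where "t = BigTheta K b p"
  define e0 where "e0 = Delta K p q"
  define q1 where "q1 = Theta K q p"
  define b1 where "b1 = lrest K q1 b"
  define E0 where "E0 = Eps K [e0, q1]"
  define f1 where "f1 = Delta K t s"
  define f where "f = Theta K s t"
  define e where "e = Delta K p x"
  define e1 where "e1 = Delta K q1 x"
  define e2 where "e2 = Theta K x p"
  define t' where "t' = Delta K r s"
  define g where "g = Theta K s r"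
  define b2 where "b2 = rrest K b t'"
  define E1 where "E1 = Eps K [t', g]"
  define f2 where "f2 = Theta K t' t"
  have e0: "e0 \<in> Obj K" and q1: "q1 \<in> Obj K" and F0: "pa_F K e0 q1"
    using p q F_basic unfolding e0_def q1_def by simp_all
  have q1q: "pa_le K q1 q" using le_th q p unfolding q1_def by simp
  have b1: "b1 \<in> Mor K" "Dom K b1 = q1" using b q1 q1q unfolding b1_def q_def by simp_all
  have tdef: "t = Cod K b1" unfolding t_def b1_def BigTheta_def q1_def q_def ..
  have t: "t \<in> Obj K" using tdef b1 by simp
  have tr: "pa_le K t r" using cod_lrest_le[of b q1] b q1 q1q unfolding tdef b1_def r_def q_def by simp
  have E0: "E0 \<in> Mor K" "Dom K E0 = e0" "Cod K E0 = q1" using eps2[OF e0 q1 F0] unfolding E0_def by simp_all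
  have spb: "star K p b = Comp K E0 b1"
    using star_obj_left[OF p b] unfolding E0_def e0_def q1_def b1_def q_def by simp
  have x: "x \<in> Obj K" and xq: "pa_le K x q"
    using dom_rrest_le[of b "Delta K (Cod K b) s"] b s le_de
    unfolding x_def BigDelta_def q_def by simp_all
  have f1: "f1 \<in> Obj K" and f: "f \<in> Obj K" and F1: "pa_F K f1 f"
    using t s F_basic unfolding f1_def f_def by simp_all
  have pbM: "Comp K E0 b1 \<in> Mor K" and cpb: "Cod K (Comp K E0 b1) = t"
    using E0 b1 tdef by simp_all
  have f1t: "pa_le K f1 t" using le_de t s unfolding f1_def by simp
  have "star K (star K p b) s = Comp K (rrest K (Comp K E0 b1) f1) (Eps K [f1, f])"
    using star_obj_right[OF pbM s] spb cpb unfolding f1_def f_def by simp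
  also have "rrest K (Comp K E0 b1) f1 = Comp K (rrest K E0 (Dom K (rrest K b1 f1))) (rrest K b1 f1)"
    using rrest_comp[of E0 b1 f1] E0 b1 f1 f1t tdef by simp
  finally have L0: "star K (star K p b) s = Comp K (Comp K (rrest K E0 (Dom K (rrest K b1 f1))) (rrest K b1 f1)) (Eps K [f1, f])" .
  have "Dom K (rrest K b1 f1) = BigDelta K b1 s" unfolding BigDelta_def f1_def tdef ..
  also have "\<dots> = e1" using C1b[of b q1 s] b q1 q1q s unfolding b1_def e1_def x_def q_def by simp
  finally have db1: "Dom K (rrest K b1 f1) = e1" .
  have e1q1: "pa_le K e1 q1" using le_de q1 x unfolding e1_def by simp
  have e1: "e1 \<in> Obj K" using q1 x unfolding e1_def by simp
  have "rrest K E0 e1 = Eps K [Delta K e0 e1, e1]"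
    using eps_rrest[OF e0 q1 e1 F0 e1q1] unfolding E0_def .
  also have "Delta K e0 e1 = e" using ident1[OF p q x xq] unfolding e0_def e1_def q1_def e_def .
  finally have rE0: "rrest K E0 e1 = Eps K [e, e1]" .
  have LHS: "star K (star K p b) s = Comp K (Comp K (Eps K [e, e1]) (rrest K b1 f1)) (Eps K [f1, f])"
    using L0 db1 rE0 by simp
  have lam: "lam K p b s = Comp K (Comp K (Eps K [e, e1]) (rrest K b1 f1)) (Eps K [f1, f])"
    unfolding lam_def Let_def e_def e1_def b1_def f1_def f_def x_def q1_def q_def t_def ..
  have t': "t' \<in> Obj K" and g: "g \<in> Obj K" and F2: "pa_F K t' g"
    using r s F_basic unfolding t'_def g_def by simp_all
  have t'r: "pa_le K t' r" using le_de r s unfolding t'_def by simp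
  have b2: "b2 \<in> Mor K" "Cod K b2 = t'" using b t' t'r unfolding b2_def r_def by simp_all
  have db2: "Dom K b2 = x" unfolding b2_def x_def BigDelta_def t'_def r_def ..
  have E1: "E1 \<in> Mor K" "Dom K E1 = t'" "Cod K E1 = g" using eps2[OF t' g F2] unfolding E1_def by simp_all
  have sbs: "star K b s = Comp K b2 E1"
    using star_obj_right[OF b s] unfolding b2_def E1_def t'_def g_def r_def by simp
  have bsM: "Comp K b2 E1 \<in> Mor K" and dbs: "Dom K (Comp K b2 E1) = x" using b2 E1 db2 by simp_all
  have e2x: "pa_le K e2 x" using le_th x p unfolding e2_def by simp
  have e2: "e2 \<in> Obj K" using x p unfolding e2_def by simp
  have "star K p (star K b s) = Comp K (Eps K [e, e2]) (lrest K e2 (Comp K b2 E1))"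
    using star_obj_left[OF p bsM] sbs dbs unfolding e_def e2_def by simp
  also have "lrest K e2 (Comp K b2 E1) = Comp K (lrest K e2 b2) (lrest K (Cod K (lrest K e2 b2)) E1)"
    using lrest_comp[of b2 E1 e2] b2 E1 e2 e2x db2 by simp
  also have "Cod K (lrest K e2 b2) = BigTheta K b2 p" unfolding BigTheta_def db2 e2_def ..
  also have "\<dots> = f2" using C1a[of b t' p] b t' t'r p unfolding b2_def f2_def t_def r_def by simp
  also have "lrest K f2 E1 = Eps K [f2, Theta K g f2]"
    using eps_lrest[OF t' g _ F2] le_th t' t unfolding E1_def f2_def by simp
  also have "Theta K g f2 = f" using ident2[OF r s t tr] unfolding g_def f2_def t'_def f_def .
  finally have R: "star K p (star K b s) = Comp K (Eps K [e, e2]) (Comp K (lrest K e2 b2) (Eps K [f2, f]))" .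
  have rho: "rho K p b s = Comp K (Comp K (Eps K [e, e2]) (lrest K e2 b2)) (Eps K [f2, f])"
    unfolding rho_def Let_def e_def e2_def b2_def f2_def f_def x_def t'_def r_def t_def ..
  have e: "e \<in> Obj K" and F3: "pa_F K e e2" using p x F_basic unfolding e_def e2_def by simp_all
  have f2: "f2 \<in> Obj K" using t' t unfolding f2_def by simp
  have F4: "pa_F K f2 f" using F_lrest[OF t' g f2 F2] le_th t' t ident2[OF r s t tr]
    unfolding f2_def g_def t'_def f_def by simp
  have Ee: "Eps K [e, e2] \<in> Mor K" "Cod K (Eps K [e, e2]) = e2" using eps2[OF e e2 F3] by simp_all
  have Ef: "Eps K [f2, f] \<in> Mor K" "Dom K (Eps K [f2, f]) = f2" using eps2[OF f2 f F4] by simp_all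
  have lb: "lrest K e2 b2 \<in> Mor K" "Dom K (lrest K e2 b2) = e2" "Cod K (lrest K e2 b2) = f2"
    using b2 e2 e2x db2 C1a[of b t' p] b t' t'r p
    unfolding b2_def f2_def t_def r_def BigTheta_def e2_def by simp_all
  have "star K p (star K b s) = rho K p b s" using R rho comp_assoc Ee Ef lb by simp
  moreover have "lam K p b s = rho K p b s" using C2 b p s by simp
  ultimately show ?thesis using LHS lam by simp
qed

end



context cpcl
begin

lemma step2:
  assumes x: "x \<in> Mor K" and b: "b \<in> Mor K" and c: "c \<in> Mor K"
    and H: "star K (star K x b) (Dom K c) = star K x (star K b (Dom K c))"
  shows "star K (star K x b) c = star K x (star K b c)"
proof -
  let ?s = "Dom K c"
  have s: "?s \<in> Obj K" "?s \<in> Mor K" using c by simp_all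
  have cs: "c = Comp K ?s c" using c by simp
  let ?v = "star K b ?s"
  have v: "?v \<in> Mor K" using b s by simp
  have cv: "pa_le K (Cod K ?v) (Dom K c)" using star_le_cod[of b ?s] b c by simp
  have cvO: "Cod K ?v \<in> Obj K" using v by simp
  let ?c1 = "lrest K (Cod K ?v) c"
  have c1: "?c1 \<in> Mor K" "Dom K ?c1 = Cod K ?v" using c cv cvO by simp_all
  have "star K b c = star K b (Comp K ?s c)" using cs by simp
  also have "\<dots> = star K ?v c" using P2'[of b ?s c] b c s by simp
  also have "\<dots> = Comp K ?v ?c1" using P3b[OF v c cv] .
  finally have bc: "star K b c = Comp K ?v ?c1" .
  let ?w = "star K x ?v"
  have w: "?w \<in> Mor K" using x v by simp
  have cw: "pa_le K (Cod K ?w) (Cod K ?v)" using star_le_cod[OF x v] .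
  have cwO: "Cod K ?w \<in> Obj K" using w by simp
  have "star K x (star K b c) = star K x (Comp K ?v ?c1)" using bc by simp
  also have "\<dots> = star K ?w ?c1" using P2'[OF x v c1(1)] c1 by simp
  also have "\<dots> = Comp K ?w (lrest K (Cod K ?w) ?c1)" using P3b[OF w c1(1)] c1 cw by simp
  also have "lrest K (Cod K ?w) ?c1 = lrest K (Cod K ?w) c"
    using lrest_lrest[OF c cwO cvO cw cv] .
  finally have R: "star K x (star K b c) = Comp K ?w (lrest K (Cod K ?w) c)" .
  have xb: "star K x b \<in> Mor K" using x b by simp
  have "star K (star K x b) c = star K (star K x b) (Comp K ?s c)" using cs by simp
  also have "\<dots> = star K (star K (star K x b) ?s) c" using P2'[OF xb s(2) c] c by simp
  also have "\<dots> = star K ?w c" using H by simp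
  also have "\<dots> = Comp K ?w (lrest K (Cod K ?w) c)" using P3b[OF w c] cw cv le_trans[OF cwO cvO] c by simp
  finally show ?thesis using R by simp
qed

lemma step3:
  assumes a: "a \<in> Mor K" and y: "y \<in> Mor K" and c: "c \<in> Mor K"
    and H: "star K (star K (Cod K a) y) c = star K (Cod K a) (star K y c)"
  shows "star K (star K a y) c = star K a (star K y c)"
proof -
  let ?p = "Cod K a"
  have p: "?p \<in> Obj K" "?p \<in> Mor K" using a by simp_all
  have ap: "a = Comp K a ?p" using a by simp
  let ?u = "star K ?p y"
  have u: "?u \<in> Mor K" using y p by simp
  have du: "pa_le K (Dom K ?u) (Cod K a)" using star_le_dom[of ?p y] p y by simp
  have duO: "Dom K ?u \<in> Obj K" using u by simp
  let ?a1 = "rrest K a (Dom K ?u)"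
  have a1: "?a1 \<in> Mor K" "Cod K ?a1 = Dom K ?u" using a du duO by simp_all
  have "star K a y = star K (Comp K a ?p) y" using ap by simp
  also have "\<dots> = star K a ?u" using P2[of a ?p y] a y p by simp
  also have "\<dots> = Comp K ?a1 ?u" using P3a[OF a u du] .
  finally have ay: "star K a y = Comp K ?a1 ?u" .
  let ?w = "star K ?u c"
  have w: "?w \<in> Mor K" using u c by simp
  have dw: "pa_le K (Dom K ?w) (Dom K ?u)" using star_le_dom[OF u c] .
  have dwO: "Dom K ?w \<in> Obj K" using w by simp
  have "star K (star K a y) c = star K (Comp K ?a1 ?u) c" using ay by simp
  also have "\<dots> = star K ?a1 ?w" using P2[OF a1(1) u c] a1 by simp
  also have "\<dots> = Comp K (rrest K ?a1 (Dom K ?w)) ?w" using P3a[OF a1(1) w] a1 dw by simp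
  also have "rrest K ?a1 (Dom K ?w) = rrest K a (Dom K ?w)"
    using rrest_rrest[OF a dwO duO dw du] .
  finally have L: "star K (star K a y) c = Comp K (rrest K a (Dom K ?w)) ?w" .
  have yc: "star K y c \<in> Mor K" using y c by simp
  have "star K a (star K y c) = star K (Comp K a ?p) (star K y c)" using ap by simp
  also have "\<dots> = star K a (star K ?p (star K y c))" using P2[OF a p(2) yc] a by simp
  also have "\<dots> = star K a ?w" using H by simp
  also have "\<dots> = Comp K (rrest K a (Dom K ?w)) ?w" using P3a[OF a w] dw du le_trans[OF dwO duO] a by simp
  finally show ?thesis using L by simp
qed

lemma assoc:
  assumes a: "a \<in> Mor K" and b: "b \<in> Mor K" and c: "c \<in> Mor K"
  shows "star K (star K a b) c = star K a (star K b c)"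
proof (rule step3[OF a b c])
  show "star K (star K (Cod K a) b) c = star K (Cod K a) (star K b c)"
    using step2[of "Cod K a" b c] core[of "Cod K a" b "Dom K c"] a b c by simp
qed

lemma drc: "drc_semigroup (Mor K) (star K) (Dom K) (Cod K)"
  unfolding drc_semigroup_def
proof (intro conjI ballI)
  fix a b assume a: "a \<in> Mor K" and b: "b \<in> Mor K"
  show "star K a b \<in> Mor K" using a b by simp
  show "Dom K (star K a b) = Dom K (star K a (Dom K b))"
    using dom_star[of a b] dom_star[of a "Dom K b"] a b by simp
  show "Cod K (star K a b) = Cod K (star K (Cod K a) b)"
    using cod_star[of a b] cod_star[of "Cod K a" b] a b by simp
  let ?x = "Dom K (star K a b)" and ?t = "Dom K a"
  have x: "?x \<in> Obj K" and t: "?t \<in> Obj K" using a b by simp_all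
  have xt: "pa_le K ?x ?t" using star_le_dom a b by simp
  have 1: "star K ?t ?x = ?x" using P3a[of ?t ?x] rrest_obj[OF t x xt] x t xt by simp
  have 2: "star K ?x ?t = ?x" using P3b[of ?x ?t] lrest_obj[OF t x xt] x t xt by simp
  show "Dom K (star K a b) = star K (star K (Dom K a) (Dom K (star K a b))) (Dom K a)"
    using 1 2 by simp
  let ?y = "Cod K (star K a b)" and ?r = "Cod K b"
  have y: "?y \<in> Obj K" and r: "?r \<in> Obj K" using a b by simp_all
  have yr: "pa_le K ?y ?r" using star_le_cod a b by simp
  have 3: "star K ?r ?y = ?y" using P3a[of ?r ?y] rrest_obj[OF r y yr] y r yr by simp
  have 4: "star K ?y ?r = ?y" using P3b[of ?y ?r] lrest_obj[OF r y yr] y r yr by simp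
  show "Cod K (star K a b) = star K (star K (Cod K b) (Cod K (star K a b))) (Cod K b)"
    using 3 4 by simp
next
  fix a assume a: "a \<in> Mor K"
  show "Dom K a \<in> Mor K" "Cod K a \<in> Mor K" using a by simp_all
  show "star K (Dom K a) a = a" using P1[of "Dom K a" a] a by simp
  show "star K a (Cod K a) = a" using P1[of a "Cod K a"] a by simp
  show "Cod K (Dom K a) = Dom K a" "Dom K (Cod K a) = Cod K a" using a by simp_all
next
  fix a b c assume "a \<in> Mor K" "b \<in> Mor K" "c \<in> Mor K"
  then show "star K (star K a b) c = star K a (star K b c)" by (rule assoc)
qed

end

theorem theorem6p5:
  fixes K :: "'m cpc"
  assumes "chained_projection_category K"
  shows "drc_semigroup (Mor K) (star K) (Dom K) (Cod K)"
proof -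
  interpret cpcl K by (rule cpcl.intro) (rule assms)
  show ?thesis by (rule drc)
qed

end
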